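(* Let $G=(V,E)$ be a finite connected graph and $A$ an irreducible, lazy transition matrix on $V$, with $E_A=\{(i,j):A(i,j)>0\}$. Let $M$ be the transition matrix of the Markov chain on $\bar S=S\times V$ which moves from $(x,v)$ to $(T_{v'}x,v')$ with probability $A(v,v')$. For each $i\in V$ fix a finite integer $s(i)$ and a sequence $(i=i_1,\dots,i_{s(i)})$ with $(i_j,i_{j+1})\in E_A$ such that $x^{(i)}:=T_{i_{s(i)}}\cdots T_{i_1}(T_i)^{s(i)}x$ is the same for all $x\in S^{(i)}$, and let $\bar S_1=\{(x^{(i)},i_{s(i)}):i\in V\}$. Then $M$ is uniformly communicating to $\bar S_1$ with a finite communication time: there exist a finite integer $\bar s$ and $\bar\alpha'>0$ such that $$\inf_{(x,v)\in\bar S,\;\bar x\in\bar S_1}M^{\bar s}((x,v),\bar x)\ge\bar\alpha'.$$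
   Context: $S=(-\mathbb{N}_0)^V$ and $S^{(i)}=\{x\in S:x_i=0\}$. For $x\in S$ and $i\in V$, $T_ix\in S$ is obtained by first setting $x'_i=\max\{x_k:\operatorname{dist}(k,i)\le1\}+1$, $x'_j=x_j$ for $j\ne i$ (dist the graph distance in $G$), and then $(T_ix)_j=x'_j-\max_kx'_k$. Irreducible: for all $v\neq v'$ there is $s$ with $A^s(v,v')>0$; lazy: $A(v,v)>0$ for all $v$. (Sequences as required for each $i$ exist.) *)

theory Defs
  imports Complex_Main
begin

definition simple_graph :: "('v \<Rightarrow> 'v \<Rightarrow> bool) \<Rightarrow> bool" where
  "simple_graph E \<longleftrightarrow> (\<forall>u v. E u v \<longrightarrow> E v u) \<and> (\<forall>v. \<not> E v v)"

definition connected_graph :: "('v \<Rightarrow> 'v \<Rightarrow> bool) \<Rightarrow> bool" where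
  "connected_graph E \<longleftrightarrow> (\<forall>u v. (u, v) \<in> {(a, b). E a b}\<^sup>*)"

definition Sset :: "('v \<Rightarrow> int) set" where
  "Sset = {x. \<forall>v. x v \<le> 0}"

definition Si :: "'v \<Rightarrow> ('v \<Rightarrow> int) set" where
  "Si i = {x \<in> Sset. x i = 0}"

text \<open>The update T_i: dist(k,i) \<le> 1 iff k = i or k adjacent to i.\<close>
definition Tmap :: "('v::finite \<Rightarrow> 'v \<Rightarrow> bool) \<Rightarrow> 'v \<Rightarrow> ('v \<Rightarrow> int) \<Rightarrow> ('v \<Rightarrow> int)" where
  "Tmap E i x = (let x' = x(i := Max {x k | k. k = i \<or> E k i} + 1)
                 in (\<lambda>j. x' j - Max (range x')))"

definition stochastic :: "('v::finite \<Rightarrow> 'v \<Rightarrow> real) \<Rightarrow> bool" where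
  "stochastic A \<longleftrightarrow> (\<forall>u v. A u v \<ge> 0) \<and> (\<forall>u. (\<Sum>v\<in>UNIV. A u v) = 1)"

fun matpow :: "('v::finite \<Rightarrow> 'v \<Rightarrow> real) \<Rightarrow> nat \<Rightarrow> 'v \<Rightarrow> 'v \<Rightarrow> real" where
  "matpow A 0 u v = (if u = v then 1 else 0)"
| "matpow A (Suc n) u v = (\<Sum>w\<in>UNIV. A u w * matpow A n w v)"

definition irreducible_mat :: "('v::finite \<Rightarrow> 'v \<Rightarrow> real) \<Rightarrow> bool" where
  "irreducible_mat A \<longleftrightarrow> (\<forall>v v'. v \<noteq> v' \<longrightarrow> (\<exists>s. matpow A s v v' > 0))"

definition lazy_mat :: "('v \<Rightarrow> 'v \<Rightarrow> real) \<Rightarrow> bool" where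
  "lazy_mat A \<longleftrightarrow> (\<forall>v. A v v > 0)"

definition Mstep :: "('v::finite \<Rightarrow> 'v \<Rightarrow> bool) \<Rightarrow> ('v \<Rightarrow> 'v \<Rightarrow> real)
    \<Rightarrow> ('v \<Rightarrow> int) \<times> 'v \<Rightarrow> ('v \<Rightarrow> int) \<times> 'v \<Rightarrow> real" where
  "Mstep E A a b = (if fst b = Tmap E (snd b) (fst a) then A (snd a) (snd b) else 0)"

fun Mpow :: "('v::finite \<Rightarrow> 'v \<Rightarrow> bool) \<Rightarrow> ('v \<Rightarrow> 'v \<Rightarrow> real) \<Rightarrow> nat
    \<Rightarrow> ('v \<Rightarrow> int) \<times> 'v \<Rightarrow> ('v \<Rightarrow> int) \<times> 'v \<Rightarrow> real" where
  "Mpow E A 0 a b = (if a = b then 1 else 0)"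
| "Mpow E A (Suc n) a b =
     (\<Sum>w\<in>UNIV. A (snd a) w * Mpow E A n (Tmap E w (fst a), w) b)"

text \<open>For a sequence l = [i_1,...,i_s] (with i_1 = i):
  seqmap E i l x = T_{i_s} ... T_{i_1} (T_i)^s x.\<close>
definition seqmap :: "('v::finite \<Rightarrow> 'v \<Rightarrow> bool) \<Rightarrow> 'v \<Rightarrow> 'v list \<Rightarrow> ('v \<Rightarrow> int) \<Rightarrow> ('v \<Rightarrow> int)" where
  "seqmap E i l x = fold (Tmap E) l ((Tmap E i ^^ length l) x)"

definition valid_seq :: "('v \<Rightarrow> 'v \<Rightarrow> real) \<Rightarrow> 'v \<Rightarrow> 'v list \<Rightarrow> bool" where
  "valid_seq A i l \<longleftrightarrow> l \<noteq> [] \<and> hd l = i \<and>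
     (\<forall>j. Suc j < length l \<longrightarrow> A (l ! j) (l ! Suc j) > 0)"

end

theory Submission
  imports Defs
begin


definition dg :: "('v::finite \<Rightarrow> int) \<Rightarrow> 'v \<Rightarrow> int" where
  "dg x p = Max (range x) - x p"

lemma finr[simp]: "finite (range (x::'v::finite \<Rightarrow> 'a))" by (rule finite_imageI[OF finite])

lemma le_Max: "(x::'v::finite\<Rightarrow>int) a \<le> Max (range x)"
  by (rule Max_ge) auto

lemma Max_ex: "\<exists>j. Max (range (x::'v::finite\<Rightarrow>int)) = x j"
proof -
  have "Max (range x) \<in> range x" by (rule Max_in) auto
  then show ?thesis by (metis rangeE)
qed

lemma dg_nonneg: "0 \<le> dg x p"
  unfolding dg_def by (simp add: Max_ge)

lemma Max_minus: "Max (range (\<lambda>j. f j - (c::int))) = Max (range (f::'v::finite\<Rightarrow>int)) - c"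
proof (rule Max_eqI)
  show "finite (range (\<lambda>j. f j - c))" by simp
  show "\<And>y. y \<in> range (\<lambda>j. f j - c) \<Longrightarrow> y \<le> Max (range f) - c"
    by (auto simp: Max_ge)
  have "Max (range f) \<in> range f" by simp
  then obtain j where "Max (range f) = f j" by blast
  then show "Max (range f) - c \<in> range (\<lambda>j. f j - c)" by (metis rangeI)
qed

definition Nb :: "('v::finite \<Rightarrow> 'v \<Rightarrow> bool) \<Rightarrow> 'v \<Rightarrow> ('v \<Rightarrow> int) \<Rightarrow> int" where
  "Nb E u x = Max {x k | k. k = u \<or> E k u}"
definition xp :: "('v::finite \<Rightarrow> 'v \<Rightarrow> bool) \<Rightarrow> 'v \<Rightarrow> ('v \<Rightarrow> int) \<Rightarrow> 'v \<Rightarrow> int" where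
  "xp E u x = x(u := Nb E u x + 1)"

lemma Tmap_alt: "Tmap E u x = (\<lambda>j. xp E u x j - Max (range (xp E u x)))"
  by (simp add: Tmap_def xp_def Nb_def Let_def)

lemma finNb: "finite {(x::'v::finite\<Rightarrow>int) k | k. k = u \<or> E k u}"
  by (rule finite_subset[of _ "range x"]) auto

lemma Nb_ge: "k = u \<or> E k u \<Longrightarrow> x k \<le> Nb E u x"
  unfolding Nb_def by (rule Max_ge[OF finNb]) auto

lemma Nb_le: "Nb E u x \<le> Max (range x)"
  unfolding Nb_def
  by (subst Max_le_iff[OF finNb]) (auto simp: Max_ge)

lemma dgT: "dg (Tmap E u x) p = Max (range (xp E u x)) - xp E u x p"
  unfolding dg_def Tmap_alt Max_minus by simp

lemma Max_xp_le: "Max (range (xp E u x)) \<le> Max (range x) + 1"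
proof -
  obtain j where j: "Max (range (xp E u x)) = xp E u x j" using Max_ex by blast
  have "x j \<le> Max (range x)" by (rule le_Max)
  moreover have "xp E u x j = (if j = u then Nb E u x + 1 else x j)" by (simp add: xp_def)
  ultimately show ?thesis using Nb_le[of E u x] unfolding j by smt
qed

lemma xp_ge: "x p \<le> xp E u x p"
  using Nb_ge[of u u E x] by (auto simp: xp_def)

lemma dg_step: "dg (Tmap E u x) p \<le> dg x p + 1"
  using Max_xp_le[of E u x] xp_ge[of x p E u] dgT[of E u x p] dg_def[of x p] by linarith

lemma dg_stepq: assumes "p = q \<or> E p q" shows "dg (Tmap E q x) q \<le> max 0 (dg x p - 1)"
proof -
  obtain j0 where j0: "Max (range (xp E q x)) = xp E q x j0"
    using Max_ex[of "xp E q x"] by blast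
  have "x p \<le> Nb E q x" using Nb_ge assms by blast
  moreover have "x j0 \<le> Max (range x)" by (rule le_Max)
  moreover have "xp E q x j0 = (if j0 = q then Nb E q x + 1 else x j0)" by (simp add: xp_def)
  moreover have "xp E q x q = Nb E q x + 1" by (simp add: xp_def)
  ultimately show ?thesis using dgT[of E q x q] dg_def[of x p] j0
    by smt
qed

lemma dg_fold: "dg (fold (Tmap E) ws x) p \<le> dg x p + int (length ws)"
proof (induction ws arbitrary: x)
  case Nil then show ?case by simp
next
  case (Cons a ws)
  have "dg (fold (Tmap E) ws (Tmap E a x)) p \<le> dg (Tmap E a x) p + int (length ws)" by (rule Cons)
  with dg_step[of E a x p] show ?case by simp
qed

lemma dg_lazy: "dg (((Tmap E q) ^^ k) x) q \<le> max 0 (dg x q - int k)"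
proof (induction k)
  case 0 then show ?case using dg_nonneg[of x q] by simp
next
  case (Suc k)
  have "dg (Tmap E q (((Tmap E q) ^^ k) x)) q \<le> max 0 (dg (((Tmap E q) ^^ k) x) q - 1)"
    by (rule dg_stepq) simp
  with Suc show ?case by simp
qed

lemma phase:
  assumes "ws \<noteq> []" "last ws = q" "p = q \<or> E p q" "dg x p = 0"
  shows "dg (fold (Tmap E) (ws @ replicate (length ws) q) x) q = 0"
proof -
  obtain ws0 where ws: "ws = ws0 @ [q]" using assms(1,2) append_butlast_last_id by metis
  define y where "y = fold (Tmap E) ws0 x"
  have "dg y p \<le> int (length ws0)" using dg_fold[where E=E and ws=ws0 and x=x and p=p] assms(4) by (simp add: y_def)
  moreover have "dg (Tmap E q y) q \<le> max 0 (dg y p - 1)" using assms(3) by (rule dg_stepq)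
  ultimately have "dg (Tmap E q y) q \<le> int (length ws0)" by simp
  then have "dg (((Tmap E q) ^^ (Suc (length ws0))) (Tmap E q y)) q \<le> 0"
    using dg_lazy[where E=E and q=q and k="Suc (length ws0)" and x="Tmap E q y"] by simp
  moreover have "fold (Tmap E) (ws @ replicate (length ws) q) x = ((Tmap E q) ^^ (Suc (length ws0))) (Tmap E q y)"
    unfolding ws y_def by (simp add: funpow_Suc_right del: funpow.simps)
  ultimately show ?thesis using dg_nonneg by (metis antisym)
qed

lemma Max_Tmap: "Max (range (Tmap E u x)) = 0"
  unfolding Tmap_alt Max_minus by simp

lemma Max_fold: "ws \<noteq> [] \<or> Max (range x) = 0 \<Longrightarrow> Max (range (fold (Tmap E) ws x)) = 0"
proof (induction ws arbitrary: x)
  case Nil then show ?case by simp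
next
  case (Cons a ws) then show ?case using Max_Tmap[of E a x] by simp
qed



fun posw :: "('v \<Rightarrow> 'v \<Rightarrow> real) \<Rightarrow> 'v \<Rightarrow> 'v list \<Rightarrow> bool" where
  "posw A u [] = True"
| "posw A u (w # ws) = (A u w > 0 \<and> posw A w ws)"

fun wprob :: "('v \<Rightarrow> 'v \<Rightarrow> real) \<Rightarrow> 'v \<Rightarrow> 'v list \<Rightarrow> real" where
  "wprob A u [] = 1"
| "wprob A u (w # ws) = A u w * wprob A w ws"

fun chainc :: "('v \<Rightarrow> 'v \<Rightarrow> bool) \<Rightarrow> 'v \<Rightarrow> 'v list \<Rightarrow> bool" where
  "chainc E p [] = True"
| "chainc E p (q # qs) = ((p = q \<or> E p q) \<and> chainc E q qs)"

lemma posw_append: "posw A u (xs @ ys) \<longleftrightarrow> posw A u xs \<and> posw A (last (u # xs)) ys"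
  by (induction xs arbitrary: u) auto

lemma posw_rep: "A u u > 0 \<Longrightarrow> posw A u (replicate k u)"
  by (induction k) auto

lemma last_rep: "last (u # replicate k u @ ws) = last (u # ws)"
  by (induction k) auto

lemma chainc_append: "chainc E u (xs @ ys) \<longleftrightarrow> chainc E u xs \<and> chainc E (last (u # xs)) ys"
  by (induction xs arbitrary: u) auto

lemma chainc_rep: "chainc E u (replicate k u)"
  by (induction k) auto

lemma rtrancl_chain: "(a, b) \<in> {(a, b). E a b}\<^sup>* \<Longrightarrow> \<exists>ps. chainc E a ps \<and> last (a # ps) = b"
proof (induction rule: rtrancl_induct)
  case base then show ?case by (rule exI[of _ "[]"]) simp
next
  case (step y z)
  then obtain ps where "chainc E a ps" "last (a # ps) = y" by blast
  with step(2) show ?case by (intro exI[of _ "ps @ [z]"]) (simp add: chainc_append)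
qed

lemma Mpow_nonneg: "stochastic A \<Longrightarrow> 0 \<le> Mpow E A n a b"
proof (induction n arbitrary: a)
  case 0 then show ?case by simp
next
  case (Suc n) then show ?case by (simp add: sum_nonneg stochastic_def)
qed

lemma Mpow_walk:
  assumes st: "stochastic A"
  shows "Mpow E A (length ws + n) (x, v) b \<ge>
           wprob A v ws * Mpow E A n (fold (Tmap E) ws x, last (v # ws)) b"
proof (induction ws arbitrary: x v)
  case Nil then show ?case by simp
next
  case (Cons w ws)
  have A0: "\<And>u w. 0 \<le> A u w" using st by (simp add: stochastic_def)
  have "A v w * Mpow E A (length ws + n) (Tmap E w x, w) b
      \<le> (\<Sum>w'\<in>UNIV. A v w' * Mpow E A (length ws + n) (Tmap E w' x, w') b)"
    by (rule member_le_sum) (auto intro: mult_nonneg_nonneg A0 Mpow_nonneg[OF st])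
  moreover have "A v w * (wprob A w ws * Mpow E A n (fold (Tmap E) ws (Tmap E w x), last (w # ws)) b)
      \<le> A v w * Mpow E A (length ws + n) (Tmap E w x, w) b"
    by (rule mult_left_mono[OF Cons A0])
  ultimately show ?case by (simp add: mult.assoc)
qed

lemma wprob_ge:
  assumes "amin > 0" "\<And>u w. A u w > 0 \<Longrightarrow> amin \<le> A u w"
  shows "posw A u ws \<Longrightarrow> amin ^ length ws \<le> wprob A u ws"
proof (induction ws arbitrary: u)
  case Nil then show ?case by simp
next
  case (Cons w ws)
  then have "amin \<le> A u w" "amin ^ length ws \<le> wprob A w ws" using assms by auto
  then show ?case using assms(1) by (simp add: mult_mono)
qed

lemma matpow_walk:
  assumes st: "stochastic A"
  shows "matpow A n u v > 0 \<Longrightarrow> \<exists>ws. length ws = n \<and> posw A u ws \<and> last (u # ws) = v"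
proof (induction n arbitrary: u)
  case 0 then show ?case by (auto split: if_splits)
next
  case (Suc n)
  have "\<exists>w. A u w * matpow A n w v > 0"
  proof (rule ccontr)
    assume "\<not> ?thesis"
    then have "(\<Sum>w\<in>UNIV. A u w * matpow A n w v) \<le> 0"
      by (intro sum_nonpos) (auto simp: not_less)
    with Suc.prems show False by simp
  qed
  then obtain w where w: "A u w * matpow A n w v > 0" by blast
  have "0 \<le> A u w" using st by (simp add: stochastic_def)
  with w have "A u w > 0" "matpow A n w v > 0" by (auto simp: zero_less_mult_iff)
  then obtain ws where "length ws = n" "posw A w ws" "last (w # ws) = v" using Suc.IH by blast
  with \<open>A u w > 0\<close> show ?case by (intro exI[of _ "w # ws"]) auto
qed

lemma valid_posw: "(\<forall>j. Suc j < length l \<longrightarrow> A (l ! j) (l ! Suc j) > 0) \<Longrightarrow> l \<noteq> [] \<Longrightarrow> posw A (hd l) (tl l)"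
proof (induction l)
  case Nil then show ?case by simp
next
  case (Cons a l)
  show ?case
  proof (cases l)
    case Nil then show ?thesis by simp
  next
    case (Cons b l')
    have "\<forall>j. Suc j < length l \<longrightarrow> A (l ! j) (l ! Suc j) > 0"
      using Cons.prems(1) by (metis Suc_less_eq length_Cons nth_Cons_Suc)
    then have "posw A (hd l) (tl l)" using Cons.IH local.Cons by blast
    moreover have "A a b > 0" using Cons.prems(1)[rule_format, of 0] local.Cons by simp
    ultimately show ?thesis using local.Cons by simp
  qed
qed

lemma multi:
  assumes wl: "\<And>c q. length (wlk c q) = W \<and> posw A c (wlk c q) \<and> last (c # wlk c q) = q"
    and W: "W > 0" and lz: "\<And>q. A q q > 0"
  shows "chainc E p ps \<Longrightarrow> dg x p = 0 \<Longrightarrow> ps \<noteq> [] \<Longrightarrow>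
    \<exists>ws. length ws = length ps * (2*W) \<and> posw A c ws \<and> last (c # ws) = last ps
       \<and> dg (fold (Tmap E) ws x) (last ps) = 0"
proof (induction ps arbitrary: p x c)
  case Nil then show ?case by simp
next
  case (Cons q qs)
  define ws1 where "ws1 = wlk c q @ replicate W q"
  have ne: "wlk c q \<noteq> []" using wl[of c q] W by auto
  have lq: "last (wlk c q) = q" using wl[of c q] ne by simp
  have len1: "length ws1 = 2 * W" using wl[of c q] by (simp add: ws1_def)
  have pos1: "posw A c ws1" unfolding ws1_def posw_append using wl[of c q] posw_rep[of A q W, OF lz] by simp
  have last1: "last (c # ws1) = q" using W by (simp add: ws1_def)
  have dg1: "dg (fold (Tmap E) ws1 x) q = 0"
    unfolding ws1_def using phase[OF ne lq, of p E x] Cons.prems wl[of c q] by simp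
  show ?case
  proof (cases "qs = []")
    case True then show ?thesis using len1 pos1 last1 dg1 by (intro exI[of _ ws1]) simp
  next
    case False
    have "chainc E q qs" using Cons.prems by simp
    then obtain ws2 where ws2: "length ws2 = length qs * (2*W)" "posw A q ws2" "last (q # ws2) = last qs"
       "dg (fold (Tmap E) ws2 (fold (Tmap E) ws1 x)) (last qs) = 0"
      using Cons.IH[OF _ dg1 False] by blast
    have "ws2 \<noteq> []" using ws2(1) False W by auto
    then show ?thesis using ws2 len1 pos1 last1 False
      by (intro exI[of _ "ws1 @ ws2"]) (simp add: posw_append)
  qed
qed



theorem mainTheorem10:
  fixes E :: "'v::finite \<Rightarrow> 'v \<Rightarrow> bool"
    and A :: "'v \<Rightarrow> 'v \<Rightarrow> real"
    and sq :: "'v \<Rightarrow> 'v list"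
  assumes "simple_graph E" and "connected_graph E"
    and "stochastic A" and "irreducible_mat A" and "lazy_mat A"
    and "\<And>i. valid_seq A i (sq i)"
    and "\<And>i x y. x \<in> Si i \<Longrightarrow> y \<in> Si i \<Longrightarrow> seqmap E i (sq i) x = seqmap E i (sq i) y"
  shows "\<exists>s::nat. \<exists>\<alpha>::real. \<alpha> > 0 \<and>
           (\<forall>x \<in> Sset. \<forall>v. \<forall>i. \<forall>z \<in> Si i.
              Mpow E A s (x, v) (seqmap E i (sq i) z, last (sq i)) \<ge> \<alpha>)"
proof -
  note conn = assms(2) and st = assms(3) and irr = assms(4) and vs = assms(6) and sd = assms(7)
  have lzq: "\<And>q. A q q > 0" using assms(5) by (simp add: lazy_mat_def)
  have walk_any: "\<exists>ws. posw A u ws \<and> last (u # ws) = v" for u v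
  proof (cases "u = v")
    case True then show ?thesis by (intro exI[of _ "[]"]) simp
  next
    case False
    then obtain s where "matpow A s u v > 0" using irr by (auto simp: irreducible_mat_def)
    then show ?thesis using matpow_walk[OF st] by blast
  qed
  define wl0 where "wl0 u v = (SOME ws. posw A u ws \<and> last (u # ws) = v)" for u v
  have wl0: "posw A u (wl0 u v) \<and> last (u # wl0 u v) = v" for u v
    unfolding wl0_def by (rule someI_ex[OF walk_any])
  define K where "K = Max (range (\<lambda>p. length (wl0 (fst p) (snd p))))"
  have Kge: "length (wl0 u v) \<le> K" for u v
    unfolding K_def using rangeI[of "\<lambda>p. length (wl0 (fst p) (snd p))" "(u,v)"] by (intro Max_ge) auto
  define W where "W = Suc K"
  define wlk where "wlk c q = replicate (W - length (wl0 c q)) c @ wl0 c q" for c q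
  have wlk: "length (wlk c q) = W \<and> posw A c (wlk c q) \<and> last (c # wlk c q) = q" for c q
  proof -
    have "length (wlk c q) = W" using Kge[of c q] by (simp add: wlk_def W_def)
    moreover have "last (c # replicate (W - length (wl0 c q)) c) = c"
      using last_rep[of c _ "[]"] by simp
    then have "posw A c (wlk c q)" unfolding wlk_def posw_append
      using posw_rep[of A c, OF lzq] wl0[of c q] by simp
    moreover have "last (c # wlk c q) = q" unfolding wlk_def last_rep using wl0[of c q] by simp
    ultimately show ?thesis by blast
  qed
  have path_any: "\<exists>ps. chainc E a ps \<and> last (a # ps) = b" for a b
  proof -
    have "(a, b) \<in> {(a, b). E a b}\<^sup>*" using conn unfolding connected_graph_def by blast
    then show ?thesis by (rule rtrancl_chain)
  qed
  define cp where "cp a b = (SOME ps. chainc E a ps \<and> last (a # ps) = b)" for a b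
  have cp: "chainc E a (cp a b) \<and> last (a # cp a b) = b" for a b
    unfolding cp_def by (rule someI_ex[OF path_any])
  define R where "R = Max (range (\<lambda>p. length (cp (fst p) (snd p))))"
  have Rge: "length (cp a b) \<le> R" for a b
    unfolding R_def using rangeI[of "\<lambda>p. length (cp (fst p) (snd p))" "(a,b)"] by (intro Max_ge) auto
  define Lmax where "Lmax = Max (range (\<lambda>i. length (sq i)))"
  have Lge: "length (sq i) \<le> Lmax" for i unfolding Lmax_def by (rule Max_ge) auto
  define s where "s = Suc R * (2*W) + 2*Lmax"
  define amin where "amin = Min {A u w | u w. A u w > 0}"
  have finA: "finite {A u w | u w. A u w > 0}"
  proof (rule finite_subset[of _ "range (\<lambda>p. A (fst p) (snd p))"])
    show "{A u w | u w. A u w > 0} \<subseteq> range (\<lambda>p. A (fst p) (snd p))"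
    proof
      fix a assume "a \<in> {A u w | u w. A u w > 0}"
      then obtain u w where aw: "a = A u w" by blast
      show "a \<in> range (\<lambda>p. A (fst p) (snd p))" unfolding aw by (rule image_eqI[where x="(u,w)"]) simp_all
    qed
  qed simp
  have neA: "{A u w | u w. A u w > 0} \<noteq> {}" using lzq by blast
  have amin_pos: "amin > 0" unfolding amin_def Min_gr_iff[OF finA neA] by blast
  have amin_le: "amin \<le> A u w" if "A u w > 0" for u w
    unfolding amin_def by (rule Min_le[OF finA]) (use that in blast)
  have main: "amin ^ s \<le> Mpow E A s (x, v) (seqmap E i (sq i) z, last (sq i))"
    if "x \<in> Sset" and z: "z \<in> Si i" for x v i z
  proof -
    obtain m where m: "Max (range x) = x m" using Max_ex by blast
    have dgm: "dg x m = 0" using m by (simp add: dg_def)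
    define pp where "pp = cp m i @ replicate (Suc R - length (cp m i)) i"
    have chpp: "chainc E m pp" unfolding pp_def chainc_append using cp[of m i] chainc_rep by simp
    have lenpp: "length pp = Suc R" using Rge[of m i] by (simp add: pp_def)
    have nepp: "pp \<noteq> []" using lenpp by auto
    have lastpp: "last pp = i" using Rge[of m i] by (simp add: pp_def)
    obtain ws1 where ws1: "length ws1 = length pp * (2*W)" "posw A v ws1" "last (v # ws1) = last pp"
        "dg (fold (Tmap E) ws1 x) (last pp) = 0"
      using multi[of wlk W A, OF wlk _ lzq chpp dgm nepp] by (auto simp: W_def)
    define y where "y = fold (Tmap E) ws1 x"
    have ne1: "ws1 \<noteq> []" using ws1(1) lenpp by (auto simp: W_def)
    have My: "Max (range y) = 0" unfolding y_def using Max_fold ne1 by blast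
    define L where "L = length (sq i)"
    define k where "k = 2 * (Lmax - L)"
    define y2 where "y2 = (Tmap E i ^^ k) y"
    have "dg y2 i \<le> max 0 (dg y i - int k)" unfolding y2_def by (rule dg_lazy)
    moreover have "dg y i = 0" using ws1(4) lastpp by (simp add: y_def)
    ultimately have dgy2: "dg y2 i = 0" using dg_nonneg[of y2 i] by simp
    have My2: "Max (range y2) = 0" using Max_fold[of "replicate k i" y E] My by (simp add: y2_def)
    have y2S: "y2 \<in> Si i"
      using dgy2 My2 le_Max[of y2] unfolding Si_def Sset_def dg_def by auto
    define ws2 where "ws2 = replicate (L + k) i @ sq i"
    have sqne: "sq i \<noteq> []" and hdsq: "hd (sq i) = i" using vs[of i] by (auto simp: valid_seq_def)
    have possq: "posw A i (sq i)"
    proof -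
      have "\<forall>j. Suc j < length (sq i) \<longrightarrow> A (sq i ! j) (sq i ! Suc j) > 0"
        using vs[of i] by (simp add: valid_seq_def)
      from valid_posw[OF this sqne] have "posw A (hd (sq i)) (tl (sq i))" .
      moreover have "sq i = i # tl (sq i)" using sqne hdsq by (metis list.collapse)
      ultimately show ?thesis using lzq[of i] hdsq by (metis posw.simps(2))
    qed
    have lr: "last (i # replicate (L + k) i) = i" using last_rep[of i _ "[]"] by simp
    have pos2: "posw A i ws2" unfolding ws2_def posw_append lr using posw_rep[of A i, OF lzq] possq by simp
    have len2: "length ws2 = 2 * Lmax" using Lge[of i] by (simp add: ws2_def L_def k_def)
    have fold2: "fold (Tmap E) ws2 y = seqmap E i (sq i) y2"
      by (simp add: ws2_def seqmap_def y2_def L_def funpow_add)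
    define ws where "ws = ws1 @ ws2"
    have lenws: "length ws = s" using ws1(1) lenpp len2 by (simp add: ws_def s_def)
    have posws: "posw A v ws" using ws1(2,3) lastpp pos2 by (simp add: ws_def posw_append)
    have lastws: "last (v # ws) = last (sq i)" using sqne by (simp add: ws_def ws2_def)
    have foldws: "fold (Tmap E) ws x = seqmap E i (sq i) z"
      using fold2 sd[OF y2S z] by (simp add: ws_def y_def)
    have "wprob A v ws * Mpow E A 0 (fold (Tmap E) ws x, last (v # ws)) (seqmap E i (sq i) z, last (sq i))
        \<le> Mpow E A (length ws + 0) (x, v) (seqmap E i (sq i) z, last (sq i))"
      by (rule Mpow_walk[OF st])
    then have "wprob A v ws \<le> Mpow E A s (x, v) (seqmap E i (sq i) z, last (sq i))"
      using foldws lastws lenws by simp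
    moreover have "amin ^ length ws \<le> wprob A v ws" by (rule wprob_ge[OF amin_pos amin_le posws])
    ultimately show "amin ^ s \<le> Mpow E A s (x, v) (seqmap E i (sq i) z, last (sq i))"
      using lenws by simp
  qed
  have "0 < amin ^ s" using amin_pos by simp
  then show ?thesis using main by (intro exI[of _ s] exI[of _ "amin ^ s"]) auto
qed

end
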